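(* Under the standing assumptions below, if $\delta:\mathbb{S}^m\to\mathbb{R}^n$ is continuous with $\Gamma_0[\delta]=0$, then $\delta(\phi)\in\operatorname{span}\{\partial_t\gamma(\phi,0),\partial_{\phi_1}\gamma(\phi,0),\dots,\partial_{\phi_m}\gamma(\phi,0)\}$ for every $\phi\in\mathbb{S}^m$, i.e. the right nullspace of $\Gamma_0$ consists of functions tangent to the torus $(\phi,t)\mapsto\gamma(\phi,t)$ at $t=0$.
   Context: Let $\mathbb{S}=\mathbb{R}/\mathbb{Z}$, $m\ge 1$, $n\ge1$, $f:\mathbb{R}^n\to\mathbb{R}^n$ smooth, $T>0$. Let $u:\mathbb{S}^{m+1}\to\mathbb{R}^n$ be smooth and $\rho\in\mathbb{R}^m$ be such that $1,\rho_1,\dots,\rho_m$ are rationally independent, and let $\gamma(\phi,t):=u(\phi+\rho t,t)$ solve $\partial_t\gamma=Tf(\gamma)$ for every $\phi\in\mathbb{S}^m$. Let $X(\phi,t)$ solve $\partial_tX=T\,\mathrm{D}f(\gamma(\phi,t))X$, $X(\phi,0)=I_n$. Define $\Gamma_0[\delta](\phi):=X(\phi-\rho,1)\delta(\phi-\rho)-\delta(\phi)$ for continuous $\delta:\mathbb{S}^m\to\mathbb{R}^n$. Normal hyperbolicity assumption: there are continuous $w_t,w_{\phi_1},\dots,w_{\phi_m}:\mathbb{S}^m\to\mathbb{R}^n$ such that $$Q(\phi,t):=X(\phi,t)\Big(I_n-\partial_t\gamma(\phi,0)w_t^\mathsf{T}(\phi)-\sum_{i=1}^m\partial_{\phi_i}\gamma(\phi,0)w_{\phi_i}^\mathsf{T}(\phi)\Big)X^{-1}(\phi,t)$$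 is a smooth family of projections with $Q(\phi,t+1)=Q(\phi+\rho,t)$, and $\Gamma_0$ is a bijection with bounded inverse on the space of functions $\phi\mapsto Q(\phi,0)\delta(\phi)$. *)

theory Defs
  imports "HOL-Analysis.Analysis"
begin

fun Ck :: "nat \<Rightarrow> ('a::real_normed_vector \<Rightarrow> 'b::real_normed_vector) \<Rightarrow> bool" where
  "Ck 0 f = continuous_on UNIV f"
| "Ck (Suc k) f = (continuous_on UNIV f \<and> f differentiable_on UNIV \<and>
      (\<forall>v. Ck k (\<lambda>x. frechet_derivative f (at x) v)))"

definition smooth :: "('a::real_normed_vector \<Rightarrow> 'b::real_normed_vector) \<Rightarrow> bool" where
  "smooth f \<longleftrightarrow> (\<forall>k. Ck k f)"

text \<open>Functions on the torus S^m = (R/Z)^m are 1-periodic functions on R^m.\<close>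
definition torus_periodic :: "(real^'m \<Rightarrow> 'b) \<Rightarrow> bool" where
  "torus_periodic g \<longleftrightarrow> (\<forall>\<phi> i. g (\<phi> + axis i 1) = g \<phi>)"

definition torus_cont :: "(real^'m \<Rightarrow> 'b::topological_space) \<Rightarrow> bool" where
  "torus_cont g \<longleftrightarrow> continuous_on UNIV g \<and> torus_periodic g"

definition rat_indep :: "real^'m \<Rightarrow> bool" where
  "rat_indep \<rho> \<longleftrightarrow> (\<forall>(k0::int) (k::'m \<Rightarrow> int).
      of_int k0 + (\<Sum>i\<in>UNIV. of_int (k i) * \<rho> $ i) = 0 \<longrightarrow> k0 = 0 \<and> (\<forall>i. k i = 0))"

definition gam :: "(real^'m \<Rightarrow> real \<Rightarrow> real^'n) \<Rightarrow> real^'m \<Rightarrow> real^'m \<Rightarrow> real \<Rightarrow> real^'n" where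
  "gam u \<rho> \<phi> t = u (\<phi> + t *\<^sub>R \<rho>) t"

definition dt_gam :: "(real^'m \<Rightarrow> real \<Rightarrow> real^'n) \<Rightarrow> real^'m \<Rightarrow> real^'m \<Rightarrow> real^'n" where
  "dt_gam u \<rho> \<phi> = vector_derivative (\<lambda>s. gam u \<rho> \<phi> s) (at 0)"

definition dphi_gam :: "(real^'m \<Rightarrow> real \<Rightarrow> real^'n) \<Rightarrow> real^'m \<Rightarrow> 'm \<Rightarrow> real^'m \<Rightarrow> real^'n" where
  "dphi_gam u \<rho> i \<phi> = vector_derivative (\<lambda>s. gam u \<rho> (\<phi> + s *\<^sub>R axis i 1) 0) (at 0)"

definition outer :: "real^'n \<Rightarrow> real^'n \<Rightarrow> real^'n^'n" where
  "outer a b = (\<chi> r c. a $ r * b $ c)"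

definition Dmat :: "(real^'n \<Rightarrow> real^'n) \<Rightarrow> real^'n \<Rightarrow> real^'n^'n" where
  "Dmat f x = matrix (frechet_derivative f (at x))"

definition Gamma0 :: "(real^'m \<Rightarrow> real \<Rightarrow> real^'n^'n) \<Rightarrow> real^'m \<Rightarrow> (real^'m \<Rightarrow> real^'n) \<Rightarrow> real^'m \<Rightarrow> real^'n" where
  "Gamma0 X \<rho> \<delta> = (\<lambda>\<phi>. X (\<phi> - \<rho>) 1 *v \<delta> (\<phi> - \<rho>) - \<delta> \<phi>)"

definition supnorm :: "(real^'m \<Rightarrow> real^'n) \<Rightarrow> real" where
  "supnorm g = (SUP \<phi>. norm (g \<phi>))"

definition Qproj :: "(real^'m \<Rightarrow> real \<Rightarrow> real^'n) \<Rightarrow> real^'m \<Rightarrow> (real^'m \<Rightarrow> real \<Rightarrow> real^'n^'n)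
    \<Rightarrow> (real^'m \<Rightarrow> real^'n) \<Rightarrow> ('m \<Rightarrow> real^'m \<Rightarrow> real^'n) \<Rightarrow> real^'m \<Rightarrow> real \<Rightarrow> real^'n^'n" where
  "Qproj u \<rho> X wt wphi \<phi> t =
     X \<phi> t ** (mat 1 - outer (dt_gam u \<rho> \<phi>) (wt \<phi>)
                 - (\<Sum>i\<in>UNIV. outer (dphi_gam u \<rho> i \<phi>) (wphi i \<phi>)))
       ** matrix_inv (X \<phi> t)"

definition normally_hyperbolic ::
  "(real^'m \<Rightarrow> real \<Rightarrow> real^'n) \<Rightarrow> real^'m \<Rightarrow> (real^'m \<Rightarrow> real \<Rightarrow> real^'n^'n) \<Rightarrow> bool" where
  "normally_hyperbolic u \<rho> X \<longleftrightarrow>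
    (\<exists>wt wphi. torus_cont wt \<and> (\<forall>i. torus_cont (wphi i)) \<and>
      (let Q = Qproj u \<rho> X wt wphi;
           V = {(\<lambda>\<phi>. Q \<phi> 0 *v \<delta> \<phi>) | \<delta>. torus_cont \<delta>} in
        smooth (\<lambda>p. Q (fst p) (snd p)) \<and>
        (\<forall>\<phi> t. Q \<phi> t ** Q \<phi> t = Q \<phi> t) \<and>
        (\<forall>\<phi> t. Q \<phi> (t + 1) = Q (\<phi> + \<rho>) t) \<and>
        bij_betw (Gamma0 X \<rho>) V V \<and>
        (\<exists>C. \<forall>g\<in>V. supnorm g \<le> C * supnorm (Gamma0 X \<rho> g))))"

end

theory Submission
  imports Defs
begin

lemma gronwall_back:
  fixes x :: "real \<Rightarrow> real^'n" and A :: "real \<Rightarrow> real^'n^'n"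
  assumes d: "\<And>t. (x has_vector_derivative (A t *v x t)) (at t)"
    and K: "\<And>t y. t \<in> {0..1} \<Longrightarrow> norm (A t *v y) \<le> K * norm y"
    and x1: "x 1 = 0"
  shows "x 0 = 0"
proof -
  define k where "k t = (x t \<bullet> x t) * exp (2*K*t)" for t
  have dk: "(k has_real_derivative (2 * (x t \<bullet> (A t *v x t)) + 2*K*(x t \<bullet> x t)) * exp (2*K*t)) (at t)" for t
  proof -
    have "((\<lambda>t. x t \<bullet> x t) has_real_derivative 2 * (x t \<bullet> (A t *v x t))) (at t)"
    proof -
      have "((\<lambda>t. x t \<bullet> x t) has_derivative (\<lambda>h. x t \<bullet> (h *\<^sub>R (A t *v x t)) + (h *\<^sub>R (A t *v x t)) \<bullet> x t)) (at t)"
        using d[of t] unfolding has_vector_derivative_def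
        by (intro has_derivative_inner) auto
      moreover have "(\<lambda>h. x t \<bullet> (h *\<^sub>R (A t *v x t)) + (h *\<^sub>R (A t *v x t)) \<bullet> x t) = (*) (2 * (x t \<bullet> (A t *v x t)))"
        by (rule ext) (simp add: inner_commute algebra_simps)
      ultimately show ?thesis unfolding has_field_derivative_def by simp
    qed
    then show ?thesis unfolding k_def
      by (auto intro!: derivative_eq_intros simp: algebra_simps)
  qed
  have nn: "0 \<le> (2 * (x t \<bullet> (A t *v x t)) + 2*K*(x t \<bullet> x t)) * exp (2*K*t)" if "t \<in> {0..1}" for t
  proof -
    have "\<bar>x t \<bullet> (A t *v x t)\<bar> \<le> norm (x t) * norm (A t *v x t)" by (rule Cauchy_Schwarz_ineq2)
    also have "\<dots> \<le> norm (x t) * (K * norm (x t))" using K[OF that] by (simp add: mult_left_mono)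
    also have "\<dots> = K * (x t \<bullet> x t)" by (simp add: power2_norm_eq_inner[symmetric] power2_eq_square)
    finally show ?thesis by (intro mult_nonneg_nonneg) auto
  qed
  have "k 0 \<le> k 1"
    by (rule DERIV_nonneg_imp_nondecreasing[of 0 1 k]) (use dk nn in auto)
  then have "x 0 \<bullet> x 0 \<le> 0" using x1 by (simp add: k_def)
  then show ?thesis by (metis inner_gt_zero_iff not_le)
qed

lemma bl_mv: "bounded_linear (\<lambda>M::real^'n^'m. M *v v)"
proof -
  have "linear (\<lambda>M::real^'n^'m. M *v v)"
    by (rule linearI) (simp_all add: matrix_vector_mult_add_rdistrib scaleR_matrix_vector_assoc)
  then show ?thesis by (simp add: linear_conv_bounded_linear)
qed
lemma inv_ok: assumes "invertible (A::real^'n^'n)" shows "matrix_inv A ** A = mat 1" "A ** matrix_inv A = mat 1"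
  using someI_ex[OF assms[unfolded invertible_def]] unfolding matrix_inv_def by auto
lemma mat1_inv: "matrix_inv (mat 1 :: real^'n^'n) = mat 1"
  using inv_ok[of "mat 1"] by (metis invertible_def matrix_mul_lid matrix_mul_rid)

lemma Dmat_cont:
  fixes f :: "real^'n \<Rightarrow> real^'n"
  assumes "smooth f" and g: "continuous_on S g"
  shows "continuous_on S (\<lambda>t. Dmat f (g t))"
proof -
  have "Ck (Suc 0) f" using assms(1) unfolding smooth_def by blast
  then have c: "continuous_on UNIV (\<lambda>x. frechet_derivative f (at x) v)" for v by simp
  have "continuous_on S (\<lambda>t. frechet_derivative f (at (g t)) (axis j 1) $ i)" for i j
    by (intro continuous_intros continuous_on_compose2[OF c g]) auto
  then show ?thesis unfolding Dmat_def matrix_def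
    by (intro continuous_on_vec_lambda) auto
qed

lemma X_invertible:
  fixes f :: "real^'n \<Rightarrow> real^'n" and Y :: "real \<Rightarrow> real^'n^'n" and g :: "real \<Rightarrow> real^'n"
  assumes fs: "smooth f"
    and gd: "\<forall>t. \<exists>D. (g has_vector_derivative D) (at t)"
    and Yd: "\<forall>t. (Y has_vector_derivative (T *\<^sub>R (Dmat f (g t) ** Y t))) (at t)"
    and Y0: "Y 0 = mat 1"
  shows "invertible (Y 1)"
proof -
  define A where "A t = T *\<^sub>R Dmat f (g t)" for t
  have gc: "continuous_on UNIV g"
    using gd by (metis continuous_at_imp_continuous_on has_vector_derivative_continuous)
  have Ac: "continuous_on {0..1} A" unfolding A_def
    by (intro continuous_intros Dmat_cont[OF fs] continuous_on_subset[OF gc]) auto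
  have "bounded (A ` {0..1})"
    by (intro compact_imp_bounded compact_continuous_image Ac) auto
  then obtain B where B: "\<And>t. t \<in> {0..1} \<Longrightarrow> norm (A t) \<le> B"
    unfolding bounded_iff by (metis atLeastAtMost_iff image_eqI)
  define K where "K = real CARD('n) * real CARD('n) * B"
  have K: "norm (A t *v y) \<le> K * norm y" if "t \<in> {0..1}" for t y
  proof -
    have "\<bar>A t $ i $ j\<bar> \<le> B" for i j
      using component_le_norm_cart[of "A t $ i" j] Finite_Cartesian_Product.norm_nth_le[of "A t" i] B[OF that]
      by linarith
    then have "onorm ((*v) (A t)) \<le> K" unfolding K_def by (rule onorm_le_matrix_component)
    then show ?thesis
      using onorm[OF matrix_vector_mul_bounded_linear, of "A t" y]
      by (meson mult_right_mono norm_ge_zero order_trans)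
  qed
  have "\<forall>v. Y 1 *v v = 0 \<longrightarrow> v = 0"
  proof (intro allI impI)
    fix v assume v: "Y 1 *v v = 0"
    have d: "((\<lambda>t. Y t *v v) has_vector_derivative (A t *v (Y t *v v))) (at t)" for t
      using bounded_linear.has_vector_derivative[OF bl_mv Yd[rule_format, of t], of v]
      by (simp add: A_def flip: scaleR_matrix_vector_assoc matrix_vector_mul_assoc)
    have "Y 0 *v v = 0"
      by (rule gronwall_back[where x="\<lambda>t. Y t *v v" and A=A and K=K, OF d K v])
    then show "v = 0" using Y0 by simp
  qed
  then show ?thesis
    by (simp add: invertible_left_inverse matrix_left_invertible_ker)
qed

lemma outer_mv: "outer a b *v x = (b \<bullet> x) *\<^sub>R a"
  by (simp add: outer_def vec_eq_iff matrix_vector_mult_def inner_vec_def sum_distrib_left algebra_simps)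

lemma sum_mv: "(\<Sum>i\<in>S. M i) *v (x::real^'n) = (\<Sum>i\<in>S. (M i :: real^'n^'k) *v x)"
  using linear_sum[OF bounded_linear.linear[OF bl_mv], of M S] by simp

theorem mainTheorem13:
  fixes f :: "real^'n \<Rightarrow> real^'n" and T :: real
    and u :: "real^'m \<Rightarrow> real \<Rightarrow> real^'n" and \<rho> :: "real^'m"
    and X :: "real^'m \<Rightarrow> real \<Rightarrow> real^'n^'n"
    and \<delta> :: "real^'m \<Rightarrow> real^'n"
  assumes f_smooth: "smooth f"
    and T_pos: "T > 0"
    and u_smooth: "smooth (\<lambda>p. u (fst p) (snd p))"
    and u_per_phi: "\<forall>\<phi> t i. u (\<phi> + axis i 1) t = u \<phi> t"
    and u_per_t: "\<forall>\<phi> t. u \<phi> (t + 1) = u \<phi> t"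
    and rho_indep: "rat_indep \<rho>"
    and gam_ode: "\<forall>\<phi> t. ((\<lambda>s. gam u \<rho> \<phi> s) has_vector_derivative (T *\<^sub>R f (gam u \<rho> \<phi> t))) (at t)"
    and X_ode: "\<forall>\<phi> t. ((\<lambda>s. X \<phi> s) has_vector_derivative
                   (T *\<^sub>R (Dmat f (gam u \<rho> \<phi> t) ** X \<phi> t))) (at t)"
    and X_init: "\<forall>\<phi>. X \<phi> 0 = mat 1"
    and NH: "normally_hyperbolic u \<rho> X"
    and delta_cont: "torus_cont \<delta>"
    and null: "Gamma0 X \<rho> \<delta> = (\<lambda>\<phi>. 0)"
  shows "\<forall>\<phi>. \<delta> \<phi> \<in> span (insert (dt_gam u \<rho> \<phi>) (range (\<lambda>i. dphi_gam u \<rho> i \<phi>)))"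
proof -
  obtain wt wphi where
    Qper: "\<forall>\<phi> t. Qproj u \<rho> X wt wphi \<phi> (t + 1) = Qproj u \<rho> X wt wphi (\<phi> + \<rho>) t"
    and bij: "bij_betw (Gamma0 X \<rho>) {(\<lambda>\<phi>. Qproj u \<rho> X wt wphi \<phi> 0 *v \<delta> \<phi>) | \<delta>. torus_cont \<delta>}
                 {(\<lambda>\<phi>. Qproj u \<rho> X wt wphi \<phi> 0 *v \<delta> \<phi>) | \<delta>. torus_cont \<delta>}"
    using NH unfolding normally_hyperbolic_def Let_def by blast
  define Q where "Q = Qproj u \<rho> X wt wphi"
  define V where "V = {(\<lambda>\<phi>. Q \<phi> 0 *v \<delta> \<phi>) | \<delta>. torus_cont \<delta>}"
  define P where "P \<phi> = mat 1 - outer (dt_gam u \<rho> \<phi>) (wt \<phi>)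
                 - (\<Sum>i\<in>UNIV. outer (dphi_gam u \<rho> i \<phi>) (wphi i \<phi>))" for \<phi>
  have Qdef: "Q \<phi> t = X \<phi> t ** P \<phi> ** matrix_inv (X \<phi> t)" for \<phi> t
    unfolding Q_def Qproj_def P_def by simp
  have Q0: "Q \<phi> 0 = P \<phi>" for \<phi>
    using X_init by (simp add: Qdef mat1_inv)
  have inj: "inj_on (Gamma0 X \<rho>) V" using bij unfolding V_def Q_def bij_betw_def by blast
  define g where "g \<phi> = Q \<phi> 0 *v \<delta> \<phi>" for \<phi>
  have gV: "g \<in> V" unfolding V_def g_def using delta_cont by blast
  have zc: "torus_cont (\<lambda>\<phi>::real^'m. 0::real^'n)"
    by (simp add: torus_cont_def torus_periodic_def)
  have zV: "(\<lambda>\<phi>. 0) \<in> V" unfolding V_def using zc by force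
  have Gg: "Gamma0 X \<rho> g = (\<lambda>\<phi>. 0)"
  proof
    fix \<phi>
    define \<psi> where "\<psi> = \<phi> - \<rho>"
    have inv: "invertible (X \<psi> 1)"
      by (rule X_invertible[OF f_smooth, of "gam u \<rho> \<psi>" "X \<psi>" T]) (use gam_ode X_ode X_init in auto)
    have n: "X \<psi> 1 *v \<delta> \<psi> = \<delta> \<phi>"
      using fun_cong[OF null, of \<phi>] unfolding Gamma0_def \<psi>_def by simp
    have "Q \<phi> 0 = Q \<psi> 1"
      using Qper[rule_format, of \<psi> 0] unfolding Q_def \<psi>_def by simp
    then have "g \<phi> = (X \<psi> 1 ** P \<psi> ** matrix_inv (X \<psi> 1)) *v (X \<psi> 1 *v \<delta> \<psi>)"
      unfolding g_def n Qdef by simp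
    also have "\<dots> = X \<psi> 1 *v (P \<psi> *v \<delta> \<psi>)"
      by (simp add: matrix_vector_mul_assoc) (metis inv_ok(1)[OF inv] matrix_mul_assoc matrix_mul_rid)
    finally show "Gamma0 X \<rho> g \<phi> = 0"
      unfolding Gamma0_def g_def Q0 \<psi>_def[symmetric] by simp
  qed
  have G0: "Gamma0 X \<rho> (\<lambda>\<phi>. 0) = (\<lambda>\<phi>. 0)" by (simp add: Gamma0_def)
  have g0: "g = (\<lambda>\<phi>. 0)" using inj_onD[OF inj _ gV zV] Gg G0 by simp
  show ?thesis
  proof
    fix \<phi>
    let ?S = "insert (dt_gam u \<rho> \<phi>) (range (\<lambda>i. dphi_gam u \<rho> i \<phi>))"
    have "P \<phi> *v \<delta> \<phi> = 0" using fun_cong[OF g0, of \<phi>] by (simp add: g_def Q0)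
    then have e: "\<delta> \<phi> = (wt \<phi> \<bullet> \<delta> \<phi>) *\<^sub>R dt_gam u \<rho> \<phi> + (\<Sum>i\<in>UNIV. (wphi i \<phi> \<bullet> \<delta> \<phi>) *\<^sub>R dphi_gam u \<rho> i \<phi>)"
      by (simp add: P_def matrix_vector_mult_diff_rdistrib sum_mv outer_mv algebra_simps)
    have "(wt \<phi> \<bullet> \<delta> \<phi>) *\<^sub>R dt_gam u \<rho> \<phi> + (\<Sum>i\<in>UNIV. (wphi i \<phi> \<bullet> \<delta> \<phi>) *\<^sub>R dphi_gam u \<rho> i \<phi>) \<in> span ?S"
      by (intro span_add span_scale span_sum span_base) auto
    then show "\<delta> \<phi> \<in> span ?S" using e by simp
  qed
qed
end
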